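(* Let $M$ be an ordinal monoid with merge and $A\subseteq M$ nonempty. Then at least one of the following holds: (1) $a\cdot\mathrm{Cl}^{+}_{\sharp}(A)\subsetneq\mathrm{Cl}^{+}_{\sharp}(A)$ for some $a\in A$; (2) $\mathrm{Cl}^{+}_{\sharp}(A)\cdot a\subsetneq\mathrm{Cl}^{+}_{\sharp}(A)$ for some $a\in A$; (3) $\mathrm{Cl}^{+}_{\sharp}(A)$ has a maximum element for the order $\le$.
   Context: An ordinal monoid has generalised product $\pi$ on countable-ordinal-length words; $1=\pi(\varepsilon)$, $x\cdot y=\pi(xy)$, $x^\omega=\pi(xxx\cdots)$; ordered by $\le$ if $u\le v$ letterwise implies $\pi(u)\le\pi(v)$. In a finite semigroup $x^!$ is the idempotent power, $x^{!+k}$ the eventual value of $x^{n!+k}$. Ordinal monoid with merge: $(M,1,\le,\cdot,-^\omega,-^\sharp)$, $M$ finite, $(M,1,\le,\cdot,-^\omega)$ the presentation of an ordered finite ordinal monoid, $-^\sharp\colon M\to M$ monotone with $a^{!+k}\le a^\sharp$, $(a^!)^\sharp=a^!$, $a^\sharp a^\sharp=(a^\sharp)^\sharp=a^\sharp$, $(ab)^\sharp=a(ba)^\sharp b$ for all $a,b$, $k\in\mathbb Z$. $\mathrm{Cl}^{+}_{\sharp}(A)$ is the closure of $A$ under $\cdot$ and $-^\sharp$; for $a\in M$, $X\subseteq M$: $a\cdot X=\{a\cdot x:x\in X\}$, $X\cdot a=\{x\cdot a:x\in X\}$. *)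

theory Defs
  imports Main
begin

primrec mpow :: "('a \<Rightarrow> 'a \<Rightarrow> 'a) \<Rightarrow> 'a \<Rightarrow> 'a \<Rightarrow> nat \<Rightarrow> 'a" where
  "mpow mult one x 0 = one"
| "mpow mult one x (Suc n) = mult x (mpow mult one x n)"

definition idem_pow_plus :: "('a \<Rightarrow> 'a \<Rightarrow> 'a) \<Rightarrow> 'a \<Rightarrow> 'a \<Rightarrow> int \<Rightarrow> 'a" where
  "idem_pow_plus mult one x k =
     (THE y. \<exists>N. \<forall>n\<ge>N. mpow mult one x (nat (int (fact n) + k)) = y)"

definition idem_pow :: "('a \<Rightarrow> 'a \<Rightarrow> 'a) \<Rightarrow> 'a \<Rightarrow> 'a \<Rightarrow> 'a" where
  "idem_pow mult one x = idem_pow_plus mult one x 0"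

text \<open>Presentation of an ordered finite ordinal monoid (M,1,le,mult,omega):
  finite monoid with omega-power satisfying the Bedon--Carton axioms,
  le a partial order, mult and omega monotone.\<close>
definition ordered_ordinal_monoid ::
  "'a set \<Rightarrow> 'a \<Rightarrow> ('a \<Rightarrow> 'a \<Rightarrow> bool) \<Rightarrow> ('a \<Rightarrow> 'a \<Rightarrow> 'a) \<Rightarrow> ('a \<Rightarrow> 'a) \<Rightarrow> bool" where
  "ordered_ordinal_monoid M one le mult omega \<longleftrightarrow>
     finite M \<and> one \<in> M \<and>
     (\<forall>x\<in>M. \<forall>y\<in>M. mult x y \<in> M) \<and> (\<forall>x\<in>M. omega x \<in> M) \<and>
     (\<forall>x\<in>M. le x x) \<and>
     (\<forall>x\<in>M. \<forall>y\<in>M. le x y \<and> le y x \<longrightarrow> x = y) \<and>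
     (\<forall>x\<in>M. \<forall>y\<in>M. \<forall>z\<in>M. le x y \<and> le y z \<longrightarrow> le x z) \<and>
     (\<forall>x\<in>M. \<forall>y\<in>M. \<forall>z\<in>M. mult (mult x y) z = mult x (mult y z)) \<and>
     (\<forall>x\<in>M. mult one x = x \<and> mult x one = x) \<and>
     (\<forall>x\<in>M. \<forall>n::nat. n \<ge> 1 \<longrightarrow> omega (mpow mult one x n) = omega x) \<and>
     (\<forall>x\<in>M. \<forall>y\<in>M. mult x (omega (mult y x)) = omega (mult x y)) \<and>
     (\<forall>x\<in>M. \<forall>x'\<in>M. \<forall>y\<in>M. \<forall>y'\<in>M. le x x' \<and> le y y' \<longrightarrow> le (mult x y) (mult x' y')) \<and>
     (\<forall>x\<in>M. \<forall>y\<in>M. le x y \<longrightarrow> le (omega x) (omega y))"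

definition ordinal_monoid_with_merge ::
  "'a set \<Rightarrow> 'a \<Rightarrow> ('a \<Rightarrow> 'a \<Rightarrow> bool) \<Rightarrow> ('a \<Rightarrow> 'a \<Rightarrow> 'a) \<Rightarrow> ('a \<Rightarrow> 'a) \<Rightarrow> ('a \<Rightarrow> 'a) \<Rightarrow> bool" where
  "ordinal_monoid_with_merge M one le mult omega sharp \<longleftrightarrow>
     ordered_ordinal_monoid M one le mult omega \<and>
     (\<forall>a\<in>M. sharp a \<in> M) \<and>
     (\<forall>a\<in>M. \<forall>b\<in>M. le a b \<longrightarrow> le (sharp a) (sharp b)) \<and>
     (\<forall>a\<in>M. \<forall>k::int. le (idem_pow_plus mult one a k) (sharp a)) \<and>
     (\<forall>a\<in>M. sharp (idem_pow mult one a) = idem_pow mult one a) \<and>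
     (\<forall>a\<in>M. mult (sharp a) (sharp a) = sharp a \<and> sharp (sharp a) = sharp a) \<and>
     (\<forall>a\<in>M. \<forall>b\<in>M. sharp (mult a b) = mult a (mult (sharp (mult b a)) b))"

inductive_set cl_plus_sharp :: "('a \<Rightarrow> 'a \<Rightarrow> 'a) \<Rightarrow> ('a \<Rightarrow> 'a) \<Rightarrow> 'a set \<Rightarrow> 'a set"
  for mult :: "'a \<Rightarrow> 'a \<Rightarrow> 'a" and sharp :: "'a \<Rightarrow> 'a" and A :: "'a set" where
  base: "a \<in> A \<Longrightarrow> a \<in> cl_plus_sharp mult sharp A"
| prod: "x \<in> cl_plus_sharp mult sharp A \<Longrightarrow> y \<in> cl_plus_sharp mult sharp A \<Longrightarrow>
           mult x y \<in> cl_plus_sharp mult sharp A"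
| shrp: "x \<in> cl_plus_sharp mult sharp A \<Longrightarrow> sharp x \<in> cl_plus_sharp mult sharp A"

end

theory Submission
  imports Defs
begin

lemma idem_pow_plus_eq:
  assumes "\<And>n. n \<ge> N \<Longrightarrow> mpow mult one x (nat (int (fact n) + k)) = y"
  shows "idem_pow_plus mult one x k = y"
  unfolding idem_pow_plus_def
proof (rule the_equality)
  show "\<exists>N. \<forall>n\<ge>N. mpow mult one x (nat (int (fact n) + k)) = y" using assms by blast
next
  fix z assume "\<exists>N. \<forall>n\<ge>N. mpow mult one x (nat (int (fact n) + k)) = z"
  then obtain N' where "\<forall>n\<ge>N'. mpow mult one x (nat (int (fact n) + k)) = z" by blast
  then show "z = y" using assms[of "max N N'"] by simp
qed

context
  fixes M one le mult omega sharp A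
  assumes W: "ordinal_monoid_with_merge M one le mult omega sharp"
    and AM: "A \<subseteq> M"
    and L: "\<forall>a\<in>A. mult a ` cl_plus_sharp mult sharp A = cl_plus_sharp mult sharp A"
    and R: "\<forall>a\<in>A. (\<lambda>x. mult x a) ` cl_plus_sharp mult sharp A = cl_plus_sharp mult sharp A"
begin

abbreviation "C \<equiv> cl_plus_sharp mult sharp A"

lemma O: "ordered_ordinal_monoid M one le mult omega"
  using W unfolding ordinal_monoid_with_merge_def by (rule conjunct1)

lemma finM: "finite M" using O unfolding ordered_ordinal_monoid_def by (elim conjE) blast
lemma oneM: "one \<in> M" using O unfolding ordered_ordinal_monoid_def by (elim conjE) blast
lemma multM: "\<And>x y. x\<in>M \<Longrightarrow> y\<in>M \<Longrightarrow> mult x y \<in> M" using O unfolding ordered_ordinal_monoid_def by (elim conjE) blast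
lemma refl: "\<And>x. x\<in>M \<Longrightarrow> le x x" using O unfolding ordered_ordinal_monoid_def by (elim conjE) blast
lemma trans: "\<And>x y z. x\<in>M \<Longrightarrow> y\<in>M \<Longrightarrow> z\<in>M \<Longrightarrow> le x y \<Longrightarrow> le y z \<Longrightarrow> le x z"
  using O unfolding ordered_ordinal_monoid_def by (elim conjE) blast
lemma assoc: "\<And>x y z. x\<in>M \<Longrightarrow> y\<in>M \<Longrightarrow> z\<in>M \<Longrightarrow> mult (mult x y) z = mult x (mult y z)"
  using O unfolding ordered_ordinal_monoid_def by (elim conjE) blast
lemma unitl: "\<And>x. x\<in>M \<Longrightarrow> mult one x = x" using O unfolding ordered_ordinal_monoid_def by (elim conjE) blast
lemma unitr: "\<And>x. x\<in>M \<Longrightarrow> mult x one = x" using O unfolding ordered_ordinal_monoid_def by (elim conjE) blast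
lemma mono0: "\<forall>x\<in>M. \<forall>x'\<in>M. \<forall>y\<in>M. \<forall>y'\<in>M. le x x' \<and> le y y' \<longrightarrow> le (mult x y) (mult x' y')"
  using O unfolding ordered_ordinal_monoid_def by (elim conjE) assumption
lemma mono: "\<And>x x' y y'. x\<in>M \<Longrightarrow> x'\<in>M \<Longrightarrow> y\<in>M \<Longrightarrow> y'\<in>M \<Longrightarrow> le x x' \<Longrightarrow> le y y' \<Longrightarrow> le (mult x y) (mult x' y')"
  using mono0 by blast

lemma sharpM: "\<And>a. a\<in>M \<Longrightarrow> sharp a \<in> M" using W unfolding ordinal_monoid_with_merge_def by (elim conjE) blast
lemma smono: "\<And>a b. a\<in>M \<Longrightarrow> b\<in>M \<Longrightarrow> le a b \<Longrightarrow> le (sharp a) (sharp b)"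
  using W unfolding ordinal_monoid_with_merge_def by (elim conjE) blast
lemma sge: "\<And>a k. a\<in>M \<Longrightarrow> le (idem_pow_plus mult one a k) (sharp a)"
  using W unfolding ordinal_monoid_with_merge_def by (elim conjE) blast
lemma sidem: "\<And>a. a\<in>M \<Longrightarrow> mult (sharp a) (sharp a) = sharp a \<and> sharp (sharp a) = sharp a"
  using W unfolding ordinal_monoid_with_merge_def by (elim conjE) blast

lemma CM: "x \<in> C \<Longrightarrow> x \<in> M"
  by (induction rule: cl_plus_sharp.induct) (use AM multM sharpM in auto)

lemma finC: "finite C"
  using finM CM by (meson finite_subset subsetI)

lemma mpowM: "a \<in> M \<Longrightarrow> mpow mult one a n \<in> M"
  by (induction n) (auto simp: oneM multM)

lemma mpowC: "a \<in> C \<Longrightarrow> n \<ge> 1 \<Longrightarrow> mpow mult one a n \<in> C"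
proof (induction n)
  case 0 then show ?case by simp
next
  case (Suc n)
  show ?case
  proof (cases n)
    case 0 then show ?thesis using Suc CM unitr by simp
  next
    case (Suc m) then show ?thesis using Suc.IH Suc.prems by (simp add: cl_plus_sharp.prod)
  qed
qed

lemma mpow_add: "a \<in> M \<Longrightarrow> mpow mult one a (m + n) = mult (mpow mult one a m) (mpow mult one a n)"
  by (induction m) (auto simp: unitl mpowM assoc)

lemma mpow_mult: "a \<in> M \<Longrightarrow> mpow mult one a (m * n) = mpow mult one (mpow mult one a m) n"
  by (induction n) (auto simp: mpow_add mpowM mult.commute)

lemma mpow_leftC: "a \<in> C \<Longrightarrow> x \<in> C \<Longrightarrow> mult (mpow mult one a n) x \<in> C"
  by (induction n) (auto simp: unitl CM assoc mpowM cl_plus_sharp.prod)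

lemma mpow_Suc': "a \<in> M \<Longrightarrow> mpow mult one a (Suc n) = mult (mpow mult one a n) a"
  using mpow_add[of a n 1] by (simp add: unitr)

lemma mpow_rightC: "a \<in> C \<Longrightarrow> x \<in> C \<Longrightarrow> mult x (mpow mult one a n) \<in> C"
proof (induction n)
  case 0 then show ?case by (simp add: unitr CM)
next
  case (Suc n)
  have "mult x (mpow mult one a (Suc n)) = mult (mult x (mpow mult one a n)) a"
    using Suc.prems CM mpowM assoc mpow_Suc' by metis
  then show ?case using Suc by (simp add: cl_plus_sharp.prod)
qed

lemma injL: "a \<in> A \<Longrightarrow> inj_on (mult (mpow mult one a n)) C"
proof (induction n)
  case 0 then show ?case by (simp add: unitl CM inj_on_def)
next
  case (Suc n)
  have aC: "a \<in> C" using Suc.prems by (rule cl_plus_sharp.base)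
  have ia: "inj_on (mult a) C"
    by (rule finite_surj_inj[OF finC]) (use L Suc.prems in auto)
  show ?case unfolding inj_on_def
  proof (intro ballI impI)
    fix x y assume xy: "x \<in> C" "y \<in> C" "mult (mpow mult one a (Suc n)) x = mult (mpow mult one a (Suc n)) y"
    then have "mult a (mult (mpow mult one a n) x) = mult a (mult (mpow mult one a n) y)"
      using assoc CM aC mpowM by simp
    then have "mult (mpow mult one a n) x = mult (mpow mult one a n) y"
      using ia xy mpow_leftC aC by (meson inj_onD)
    then show "x = y" using Suc.IH Suc.prems xy by (meson inj_onD)
  qed
qed

lemma injR: "a \<in> A \<Longrightarrow> inj_on (\<lambda>x. mult x (mpow mult one a n)) C"
proof (induction n)
  case 0 then show ?case by (simp add: unitr CM inj_on_def)
next
  case (Suc n)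
  have aC: "a \<in> C" using Suc.prems by (rule cl_plus_sharp.base)
  have ia: "inj_on (\<lambda>x. mult x a) C"
    by (rule finite_surj_inj[OF finC]) (use R Suc.prems in auto)
  show ?case unfolding inj_on_def
  proof (intro ballI impI)
    fix x y assume xy: "x \<in> C" "y \<in> C" "mult x (mpow mult one a (Suc n)) = mult y (mpow mult one a (Suc n))"
    then have "mult (mult x (mpow mult one a n)) a = mult (mult y (mpow mult one a n)) a"
      using assoc CM aC mpowM mpow_Suc' by metis
    then have "mult x (mpow mult one a n) = mult y (mpow mult one a n)"
      using ia xy mpow_rightC aC by (meson inj_onD)
    then show "x = y" using Suc.IH Suc.prems xy by (meson inj_onD)
  qed
qed

lemma local_unit: "a \<in> A \<Longrightarrow> \<exists>q\<ge>1. mpow mult one a q \<in> C \<and>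
   (\<forall>c\<in>C. mult (mpow mult one a q) c = c \<and> mult c (mpow mult one a q) = c)"
proof -
  assume aA: "a \<in> A"
  have aC: "a \<in> C" using aA by (rule cl_plus_sharp.base)
  have aM: "a \<in> M" using aC CM by blast
  have "\<not> inj (\<lambda>n. mpow mult one a (Suc n))"
  proof
    assume "inj (\<lambda>n. mpow mult one a (Suc n))"
    moreover have "finite (range (\<lambda>n. mpow mult one a (Suc n)))"
      by (rule finite_subset[OF _ finM]) (use mpowM[OF aM] in blast)
    ultimately have "finite (UNIV :: nat set)" using finite_imageD by blast
    then show False by simp
  qed
  then obtain i0 j0 where ij0: "i0 \<noteq> j0" "mpow mult one a (Suc i0) = mpow mult one a (Suc j0)"
    unfolding inj_def by blast
  obtain i j where ij: "i < j" "mpow mult one a (Suc i) = mpow mult one a (Suc j)"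
  proof (cases "i0 < j0")
    case True then show ?thesis using that ij0 by blast
  next
    case False then have "j0 < i0" using ij0(1) by simp
    then show ?thesis using that ij0(2) by metis
  qed
  define q where "q = j - i"
  have q1: "q \<ge> 1" using ij q_def by simp
  have sj: "Suc j = Suc i + q" using ij q_def by simp
  let ?e = "mpow mult one a q"
  have eC: "?e \<in> C" using mpowC[OF aC q1] .
  have "\<forall>c\<in>C. mult ?e c = c \<and> mult c ?e = c"
  proof
    fix c assume cC: "c \<in> C"
    have "mult (mpow mult one a (Suc i)) (mult ?e c) = mult (mult (mpow mult one a (Suc i)) ?e) c"
      by (rule sym[OF assoc[OF mpowM[OF aM] mpowM[OF aM] CM[OF cC]]])
    also have "mult (mpow mult one a (Suc i)) ?e = mpow mult one a (Suc j)"
      using mpow_add[OF aM, of "Suc i" q] sj by simp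
    also have "\<dots> = mpow mult one a (Suc i)" using ij(2) by simp
    finally have 1: "mult ?e c = c"
      using inj_onD[OF injL[OF aA, of "Suc i"]] mpow_leftC[OF aC cC, of q] cC by blast
    have "mult (mult c ?e) (mpow mult one a (Suc i)) = mult c (mult ?e (mpow mult one a (Suc i)))"
      by (rule assoc[OF CM[OF cC] mpowM[OF aM] mpowM[OF aM]])
    also have "mult ?e (mpow mult one a (Suc i)) = mpow mult one a (Suc j)"
      using mpow_add[OF aM, of q "Suc i"] sj by (simp add: add.commute)
    also have "\<dots> = mpow mult one a (Suc i)" using ij(2) by simp
    finally have 2: "mult c ?e = c"
      using inj_onD[OF injR[OF aA, of "Suc i"]] mpow_rightC[OF aC cC, of q] cC by blast
    show "mult ?e c = c \<and> mult c ?e = c" using 1 2 by blast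
  qed
  then show ?thesis using q1 eC by blast
qed

lemma pow_unit: "a \<in> A \<Longrightarrow> u \<in> C \<Longrightarrow> \<forall>c\<in>C. mult u c = c \<and> mult c u = c \<Longrightarrow>
  idem_pow_plus mult one a 0 = u \<and> idem_pow_plus mult one a 1 = a"
proof -
  assume aA: "a \<in> A" and uC: "u \<in> C" and u: "\<forall>c\<in>C. mult u c = c \<and> mult c u = c"
  have aC: "a \<in> C" using aA by (rule cl_plus_sharp.base)
  have aM: "a \<in> M" using aC CM by blast
  obtain q where q: "q \<ge> 1" "mpow mult one a q \<in> C"
    "\<forall>c\<in>C. mult (mpow mult one a q) c = c \<and> mult c (mpow mult one a q) = c"
    using local_unit[OF aA] by blast
  have eu: "mpow mult one a q = u"
  proof -
    have "mpow mult one a q = mult (mpow mult one a q) u" using u q(2) by simp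
    also have "\<dots> = u" using q(3) uC by simp
    finally show ?thesis .
  qed
  have uu: "mpow mult one u k = u" if "k \<ge> 1" for k
    using that
  proof (induction k)
    case 0 then show ?case by simp
  next
    case (Suc k) then show ?case using u uC CM unitr by (cases k) auto
  qed
  have F: "mpow mult one a (fact n) = u" if "n \<ge> q" for n
  proof -
    have "q dvd fact n" using q(1) that by (rule dvd_fact)
    then obtain r where r: "fact n = q * r" by blast
    have "fact n \<noteq> (0::nat)" by simp
    then have "r \<ge> 1" using r by (cases r) auto
    then show ?thesis using r mpow_mult[OF aM, of q r] eu uu by simp
  qed
  have "idem_pow_plus mult one a 0 = u"
  proof (rule idem_pow_plus_eq[where N=q])
    fix n assume "n \<ge> q"
    moreover have "nat (int (fact n) + 0) = fact n" by (simp only: add_0_right nat_int)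
    ultimately show "mpow mult one a (nat (int (fact n) + 0)) = u" using F by simp
  qed
  moreover have "idem_pow_plus mult one a 1 = a"
  proof (rule idem_pow_plus_eq[where N=q])
    fix n assume "n \<ge> q"
    then have "mpow mult one a (Suc (fact n)) = a" using F u aC by simp
    moreover have "nat (int (fact n) + 1) = Suc (fact n)" by (simp del: of_nat_fact)
    ultimately show "mpow mult one a (nat (int (fact n) + 1)) = a" by simp
  qed
  ultimately show ?thesis by blast
qed

lemma has_max: "A \<noteq> {} \<Longrightarrow> \<exists>m\<in>C. \<forall>x\<in>C. le x m"
proof -
  assume "A \<noteq> {}"
  then obtain a0 where a0: "a0 \<in> A" by blast
  obtain q where q: "q \<ge> 1" "mpow mult one a0 q \<in> C"
    "\<forall>c\<in>C. mult (mpow mult one a0 q) c = c \<and> mult c (mpow mult one a0 q) = c"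
    using local_unit[OF a0] by blast
  define u where "u = mpow mult one a0 q"
  have uC: "u \<in> C" and u: "\<forall>c\<in>C. mult u c = c \<and> mult c u = c" using q u_def by auto
  have uM: "u \<in> M" using uC CM by blast
  have AC: "\<And>a. a \<in> A \<Longrightarrow> a \<in> C" by (rule cl_plus_sharp.base)
  have us: "le u (sharp a)" if "a \<in> A" for a
    using sge[of a 0] pow_unit[OF that uC u] AM that by auto
  have as: "le a (sharp a)" if "a \<in> A" for a
    using sge[of a 1] pow_unit[OF that uC u] AM that by auto
  have finA: "finite A" using AM finM finite_subset by blast
  have "\<forall>B. B \<subseteq> A \<longrightarrow> (\<exists>p\<in>C. le u p \<and> (\<forall>b\<in>B. le b p))"
  proof (intro allI impI)
    fix B assume "B \<subseteq> A"
    then have "finite B" using finA finite_subset by blast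
    then show "B \<subseteq> A \<Longrightarrow> \<exists>p\<in>C. le u p \<and> (\<forall>b\<in>B. le b p)"
    proof (induction B rule: finite_induct)
      case empty then show ?case using uC refl[OF uM] by blast
    next
      case (insert b B)
      then obtain p where p: "p \<in> C" "le u p" "\<forall>b\<in>B. le b p" by blast
      have bA: "b \<in> A" using insert by blast
      have bM: "b \<in> M" using bA AM by blast
      have pM: "p \<in> M" using p CM by blast
      have sbM: "sharp b \<in> M" using sharpM bM by blast
      let ?p = "mult p (sharp b)"
      have pC: "?p \<in> C" using p bA AC by (simp add: cl_plus_sharp.prod cl_plus_sharp.shrp)
      have "le (mult u u) ?p" using mono[OF uM pM uM sbM p(2) us[OF bA]] .
      then have 1: "le u ?p" using u uC by simp
      have 2: "le b ?p" using mono[OF uM pM bM sbM p(2) as[OF bA]] u AC[OF bA] by simp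
      have 3: "le c ?p" if "c \<in> B" for c
      proof -
        have cA: "c \<in> A" using that insert by blast
        have "le (mult c u) ?p" using mono[OF _ pM uM sbM _ us[OF bA]] p(3) that AM cA by blast
        then show ?thesis using u AC[OF cA] by simp
      qed
      show ?case using pC 1 2 3 by blast
    qed
  qed
  then obtain p where p: "p \<in> C" "\<forall>b\<in>A. le b p" by blast
  have pM: "p \<in> M" using p CM by blast
  define m where "m = sharp p"
  have mC: "m \<in> C" using p m_def by (simp add: cl_plus_sharp.shrp)
  have mM: "m \<in> M" using mC CM by blast
  have mm: "mult m m = m" "sharp m = m" using sidem[OF pM] m_def by auto
  have "le x m" if "x \<in> C" for x
    using that
  proof (induction rule: cl_plus_sharp.induct)
    case (base a)
    have aM: "a \<in> M" using base AM by blast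
    have sa: "le (sharp a) m" unfolding m_def using smono[OF aM pM] p(2) base by blast
    show ?case using trans[OF aM sharpM[OF aM] mM as[OF base] sa] .
  next
    case (prod x y)
    then show ?case using mono[OF CM[OF prod(1)] mM CM[OF prod(2)] mM] mm by simp
  next
    case (shrp x)
    then show ?case using smono[OF CM[OF shrp(1)] mM] mm by simp
  qed
  then show ?thesis using mC by blast
qed

end

theorem lemma5p6:
  fixes M :: "'a set" and one :: 'a and le :: "'a \<Rightarrow> 'a \<Rightarrow> bool"
    and mult :: "'a \<Rightarrow> 'a \<Rightarrow> 'a" and omega sharp :: "'a \<Rightarrow> 'a" and A :: "'a set"
  assumes "ordinal_monoid_with_merge M one le mult omega sharp"
    and "A \<subseteq> M" and "A \<noteq> {}"
  shows "(\<exists>a\<in>A. mult a ` cl_plus_sharp mult sharp A \<subset> cl_plus_sharp mult sharp A)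
       \<or> (\<exists>a\<in>A. (\<lambda>x. mult x a) ` cl_plus_sharp mult sharp A \<subset> cl_plus_sharp mult sharp A)
       \<or> (\<exists>m\<in>cl_plus_sharp mult sharp A. \<forall>x\<in>cl_plus_sharp mult sharp A. le x m)"
proof -
  let ?C = "cl_plus_sharp mult sharp A"
  have sL: "mult a ` ?C \<subseteq> ?C" if "a \<in> A" for a
    using that by (auto intro: cl_plus_sharp.prod cl_plus_sharp.base)
  have sR: "(\<lambda>x. mult x a) ` ?C \<subseteq> ?C" if "a \<in> A" for a
    using that by (auto intro: cl_plus_sharp.prod cl_plus_sharp.base)
  show ?thesis
  proof (cases "(\<forall>a\<in>A. mult a ` ?C = ?C) \<and> (\<forall>a\<in>A. (\<lambda>x. mult x a) ` ?C = ?C)")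
    case True
    then show ?thesis using has_max[OF assms(1,2)] assms(3) by blast
  next
    case False
    then show ?thesis using sL sR by blast
  qed
qed

end
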